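(* Let $q$ be a prime power, $2\le k\le n$, and let $\mathcal{C}\subseteq\mathbb{F}_q^n$ be a linear code of dimension $k$ and minimum Hamming distance $d$. Then $$\mathbb{E}[\mathcal{C}] = n(H_n - H_{d-1}) - \sum_{s=k}^{n-d}\frac{\alpha(\mathcal{C},s)}{\binom{n-1}{s}}.$$
   Context: $H_m=\sum_{i=1}^m 1/i$, with $H_0=0$. $\mathbb{E}[\mathcal{C}]$ is $\mathbb{E}[G]$ for any generator matrix $G\in\mathbb{F}_q^{k\times n}$ of $\mathcal{C}$, the expected number of draws when columns of $G$ are drawn independently and uniformly at random from its $n$ columns (with repetition) until the drawn columns span $\mathbb{F}_q^k$. Writing $g_j$ for the $j$-th column of a generator matrix, $\alpha(\mathcal{C},s)=|\{S\subseteq\{1,\dots,n\}: |S|=s,\ \langle g_j:j\in S\rangle=\mathbb{F}_q^k\}|$, the number of information sets of $\mathcal{C}$ of size $s$. *)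

theory Defs
  imports "HOL-Analysis.Analysis" "HOL-Library.FuncSet"
begin

text \<open>A k x n matrix over a finite field is a function G :: nat => nat => 'a,
  entry G i j for i < k, j < n. Column j is the vector (\<lambda>i. G i j) in F_q^k.\<close>

definition cols_span :: "nat \<Rightarrow> (nat \<Rightarrow> nat \<Rightarrow> 'a::field) \<Rightarrow> nat set \<Rightarrow> bool" where
  "cols_span k G S \<longleftrightarrow>
     (\<forall>v :: nat \<Rightarrow> 'a. \<exists>c :: nat \<Rightarrow> 'a. \<forall>i<k. v i = (\<Sum>j\<in>S. c j * G i j))"

definition rows_indep :: "nat \<Rightarrow> nat \<Rightarrow> (nat \<Rightarrow> nat \<Rightarrow> 'a::field) \<Rightarrow> bool" where
  "rows_indep k n G \<longleftrightarrow>
     (\<forall>c :: nat \<Rightarrow> 'a. (\<forall>j<n. (\<Sum>i<k. c i * G i j) = 0) \<longrightarrow> (\<forall>i<k. c i = 0))"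

definition code_of :: "nat \<Rightarrow> nat \<Rightarrow> (nat \<Rightarrow> nat \<Rightarrow> 'a::field) \<Rightarrow> (nat \<Rightarrow> 'a) set" where
  "code_of k n G = {x. \<exists>c :: nat \<Rightarrow> 'a. x = (\<lambda>j. if j < n then (\<Sum>i<k. c i * G i j) else 0)}"

text \<open>F_q^n as functions zero outside {..<n}.\<close>
definition space_n :: "nat \<Rightarrow> (nat \<Rightarrow> 'a::zero) set" where
  "space_n n = {x. \<forall>j\<ge>n. x j = 0}"

definition linear_code :: "nat \<Rightarrow> (nat \<Rightarrow> 'a::field) set \<Rightarrow> bool" where
  "linear_code n C \<longleftrightarrow> C \<subseteq> space_n n \<and> (\<lambda>_. 0) \<in> C \<and>
     (\<forall>x\<in>C. \<forall>y\<in>C. (\<lambda>j. x j + y j) \<in> C) \<and> (\<forall>a. \<forall>x\<in>C. (\<lambda>j. a * x j) \<in> C)"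

definition generator_matrix :: "nat \<Rightarrow> nat \<Rightarrow> (nat \<Rightarrow> nat \<Rightarrow> 'a::field) \<Rightarrow> (nat \<Rightarrow> 'a) set \<Rightarrow> bool" where
  "generator_matrix k n G C \<longleftrightarrow> rows_indep k n G \<and> code_of k n G = C"

definition hamming_weight :: "nat \<Rightarrow> (nat \<Rightarrow> 'a::zero) \<Rightarrow> nat" where
  "hamming_weight n x = card {j. j < n \<and> x j \<noteq> 0}"

definition min_dist :: "nat \<Rightarrow> (nat \<Rightarrow> 'a::zero) set \<Rightarrow> nat" where
  "min_dist n C = Min {hamming_weight n x | x. x \<in> C \<and> x \<noteq> (\<lambda>_. 0)}"

definition alpha :: "nat \<Rightarrow> nat \<Rightarrow> (nat \<Rightarrow> nat \<Rightarrow> 'a::field) \<Rightarrow> nat \<Rightarrow> nat" where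
  "alpha k n G s = card {S. S \<subseteq> {..<n} \<and> card S = s \<and> cols_span k G S}"

text \<open>E[G]: expectation of the stopping time T = first t such that the first t
  uniformly drawn columns (with repetition) span F_q^k. A length-t draw sequence is
  f in {..<t} ->E {..<n}, each having probability 1/n^t; P(T = t) is the proportion of
  such sequences whose first t columns span but first t-1 do not.\<close>
definition prob_stop :: "nat \<Rightarrow> nat \<Rightarrow> (nat \<Rightarrow> nat \<Rightarrow> 'a::field) \<Rightarrow> nat \<Rightarrow> real" where
  "prob_stop k n G t =
     real (card {f \<in> {..<t} \<rightarrow>\<^sub>E {..<n}.
                  cols_span k G (f ` {..<t}) \<and> \<not> cols_span k G (f ` {..<t - 1})})
     / real n ^ t"

definition expected_draws :: "nat \<Rightarrow> nat \<Rightarrow> (nat \<Rightarrow> nat \<Rightarrow> 'a::field) \<Rightarrow> real" where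
  "expected_draws k n G = (\<Sum>t. real t * prob_stop k n G t)"

end

theory Submission
  imports Defs
begin


lemma cols_span_mono:
  assumes "cols_span k G S" "S \<subseteq> T" "finite T"
  shows "cols_span k G T"
  unfolding cols_span_def
proof
  fix v :: "nat \<Rightarrow> 'a"
  obtain c where c: "\<forall>i<k. v i = (\<Sum>j\<in>S. c j * G i j)" using assms(1) unfolding cols_span_def by blast
  have "(\<Sum>j\<in>T. (if j \<in> S then c j else 0) * G i j) = (\<Sum>j\<in>S. c j * G i j)" for i
    by (rule sum.mono_neutral_cong_right[OF assms(3) assms(2)]) auto
  then have "\<forall>i<k. v i = (\<Sum>j\<in>T. (if j \<in> S then c j else 0) * G i j)" using c by simp
  then show "\<exists>c. \<forall>i<k. v i = (\<Sum>j\<in>T. c j * G i j)" by (rule exI[where x="\<lambda>j. if j \<in> S then c j else 0"])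
qed

lemma nonspan_annihilator:
  fixes G :: "nat \<Rightarrow> nat \<Rightarrow> 'a::field"
  assumes "finite S" "\<not> cols_span k G S"
  shows "\<exists>c. (\<exists>i<k. c i \<noteq> 0) \<and> (\<forall>j\<in>S. (\<Sum>i<k. c i * G i j) = 0)"
  using assms(2)
proof (induction k arbitrary: G)
  case 0
  then show ?case by (simp add: cols_span_def)
next
  case (Suc k)
  show ?case
  proof (cases "\<forall>j\<in>S. G k j = 0")
    case True
    show ?thesis
      by (rule exI[of _ "\<lambda>i. if i = k then 1 else 0"]) (auto simp: True if_distrib sum.delta cong: if_cong)
  next
    case False
    then obtain j0 where j0: "j0 \<in> S" "G k j0 \<noteq> 0" by auto
    define H where "H = (\<lambda>i j. G i j - (G k j / G k j0) * G i j0)"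
    have "\<not> cols_span k H S"
    proof
      assume sp: "cols_span k H S"
      have "cols_span (Suc k) G S"
        unfolding cols_span_def
      proof
        fix v :: "nat \<Rightarrow> 'a"
        define \<mu> where "\<mu> = v k / G k j0"
        obtain a where a: "\<forall>i<k. v i - \<mu> * G i j0 = (\<Sum>j\<in>S. a j * H i j)"
          using spec[OF sp[unfolded cols_span_def], of "\<lambda>i. v i - \<mu> * G i j0"] by auto
        define \<Lambda> where "\<Lambda> = (\<Sum>j\<in>S. a j * G k j) / G k j0"
        define c where "c = (\<lambda>j. a j + (if j = j0 then \<mu> - \<Lambda> else 0))"
        have sc: "(\<Sum>j\<in>S. c j * G i j) = (\<Sum>j\<in>S. a j * G i j) + (\<mu> - \<Lambda>) * G i j0" for i
        proof -
          have "(\<Sum>j\<in>S. c j * G i j) = (\<Sum>j\<in>S. a j * G i j + (if j = j0 then (\<mu> - \<Lambda>) * G i j else 0))"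
            by (intro sum.cong) (auto simp: c_def algebra_simps)
          also have "\<dots> = (\<Sum>j\<in>S. a j * G i j) + (\<mu> - \<Lambda>) * G i j0"
            by (simp add: sum.distrib j0(1) assms(1))
          finally show ?thesis .
        qed
        have sH: "(\<Sum>j\<in>S. a j * H i j) = (\<Sum>j\<in>S. a j * G i j) - \<Lambda> * G i j0" for i
          unfolding H_def \<Lambda>_def
          by (simp add: right_diff_distrib sum_subtractf sum_divide_distrib sum_distrib_right mult_ac, simp add: sum_distrib_left mult_ac)
        have "\<forall>i<Suc k. v i = (\<Sum>j\<in>S. c j * G i j)"
        proof (intro allI impI)
          fix i assume "i < Suc k"
          show "v i = (\<Sum>j\<in>S. c j * G i j)"
          proof (cases "i < k")
            case True
            then have "v i - \<mu> * G i j0 = (\<Sum>j\<in>S. a j * G i j) - \<Lambda> * G i j0"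
              using a sH by simp
            then show ?thesis unfolding sc by (simp add: algebra_simps)
          next
            case False
            then have "i = k" using \<open>i < Suc k\<close> by simp
            have "(\<mu> - \<Lambda>) * G k j0 = v k - (\<Sum>j\<in>S. a j * G k j)"
              using j0(2) unfolding \<Lambda>_def \<mu>_def by (simp add: field_simps)
            then show ?thesis using sc[of k] \<open>i = k\<close> by simp
          qed
        qed
        then show "\<exists>c. \<forall>i<Suc k. v i = (\<Sum>j\<in>S. c j * G i j)" by (rule exI[where x=c])
      qed
      then show False using Suc.prems by simp
    qed
    from Suc.IH[OF this] obtain c where c: "\<exists>i<k. c i \<noteq> 0" "\<forall>j\<in>S. (\<Sum>i<k. c i * H i j) = 0"
      by auto
    define P where "P = (\<Sum>i<k. c i * G i j0)"
    define c' where "c' = (\<lambda>i. if i < k then c i else - P / G k j0)"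
    have "\<forall>j\<in>S. (\<Sum>i<Suc k. c' i * G i j) = 0"
    proof
      fix j assume "j \<in> S"
      have e: "(\<Sum>i<k. c i * H i j) = (\<Sum>i<k. c i * G i j) - (G k j / G k j0) * P"
        unfolding H_def P_def
        by (simp add: right_diff_distrib sum_subtractf sum_distrib_left mult_ac)
      have "(\<Sum>i<Suc k. c' i * G i j) = (\<Sum>i<k. c i * G i j) + (- P / G k j0) * G k j"
        by (simp add: c'_def)
      also have "\<dots> = 0" using e c(2) \<open>j\<in>S\<close> j0(2) by (simp add: field_simps)
      finally show "(\<Sum>i<Suc k. c' i * G i j) = 0" .
    qed
    moreover have "\<exists>i<Suc k. c' i \<noteq> 0" using c(1) unfolding c'_def by auto
    ultimately show ?thesis by (intro exI[where x=c']) blast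
  qed
qed

lemma small_nonspan:
  fixes G :: "nat \<Rightarrow> nat \<Rightarrow> 'a::{field,finite}"
  assumes "finite S" "card S < k"
  shows "\<not> cols_span k G S"
proof
  assume sp: "cols_span k G S"
  define r where "r = (\<lambda>c::nat \<Rightarrow> 'a. restrict (\<lambda>i. \<Sum>j\<in>S. c j * G i j) {..<k})"
  have "({..<k} \<rightarrow>\<^sub>E (UNIV::'a set)) \<subseteq> r ` (S \<rightarrow>\<^sub>E UNIV)"
  proof
    fix w assume w: "w \<in> ({..<k} \<rightarrow>\<^sub>E (UNIV::'a set))"
    obtain c where c: "\<forall>i<k. w i = (\<Sum>j\<in>S. c j * G i j)" using sp unfolding cols_span_def by auto
    have "r (restrict c S) = w"
      using w c unfolding r_def by (auto simp: restrict_def PiE_def extensional_def intro!: sum.cong)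
    moreover have "restrict c S \<in> S \<rightarrow>\<^sub>E UNIV" by simp
    ultimately show "w \<in> r ` (S \<rightarrow>\<^sub>E UNIV)" by (metis image_eqI)
  qed
  then have "card ({..<k} \<rightarrow>\<^sub>E (UNIV::'a set)) \<le> card (r ` (S \<rightarrow>\<^sub>E UNIV))"
    by (intro card_mono finite_imageI finite_PiE assms(1)) auto
  also have "\<dots> \<le> card (S \<rightarrow>\<^sub>E (UNIV::'a set))" by (intro card_image_le finite_PiE assms(1)) auto
  finally have "CARD('a) ^ k \<le> CARD('a) ^ card S" by (simp add: card_PiE assms(1))
  moreover have "CARD('a) \<ge> 2"
  proof -
    have "{0::'a, 1} \<subseteq> UNIV" by simp
    then have "card {0::'a, 1} \<le> CARD('a)" by (intro card_mono) auto
    then show ?thesis by simp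
  qed
  then have "CARD('a) ^ card S < CARD('a) ^ k" using assms(2) by (intro power_strict_increasing) auto
  ultimately show False by linarith
qed




lemma fin_PiE_filter: "finite A \<Longrightarrow> finite {g \<in> I \<rightarrow>\<^sub>E A. P g}" if "finite I"
  by (rule finite_subset[OF _ finite_PiE[OF that]]) auto

lemma card_PiE_Suc:
  assumes "finite A"
  shows "card {f \<in> {..<Suc t} \<rightarrow>\<^sub>E A. R (f t) (restrict f {..<t})}
       = (\<Sum>y\<in>A. card {g \<in> {..<t} \<rightarrow>\<^sub>E A. R y g})"
proof -
  let ?X = "{f \<in> {..<Suc t} \<rightarrow>\<^sub>E A. R (f t) (restrict f {..<t})}"
  let ?Y = "SIGMA y:A. {g \<in> {..<t} \<rightarrow>\<^sub>E A. R y g}"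
  have "bij_betw (\<lambda>f. (f t, restrict f {..<t})) ?X ?Y"
  proof (rule bij_betw_byWitness[where f'="\<lambda>(y,g). g(t:=y)"])
    show "\<forall>a\<in>?X. (\<lambda>(y,g). g(t:=y)) (a t, restrict a {..<t}) = a"
      by (auto simp: PiE_def extensional_def restrict_def fun_eq_iff)
    show "\<forall>a'\<in>?Y. (\<lambda>f. (f t, restrict f {..<t})) ((\<lambda>(y,g). g(t:=y)) a') = a'"
      by (auto simp: PiE_def extensional_def restrict_def fun_eq_iff)
    show "(\<lambda>f. (f t, restrict f {..<t})) ` ?X \<subseteq> ?Y"
      by (auto simp: PiE_def extensional_def restrict_def)
    show "(\<lambda>(y,g). g(t:=y)) ` ?Y \<subseteq> ?X"
    proof
      fix f assume "f \<in> (\<lambda>(y,g). g(t:=y)) ` ?Y"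
      then obtain y g where yg: "y \<in> A" "g \<in> {..<t} \<rightarrow>\<^sub>E A" "R y g" "f = g(t:=y)" by auto
      have "restrict f {..<t} = g" using yg by (auto simp: PiE_def extensional_def restrict_def fun_eq_iff)
      moreover have "f \<in> {..<Suc t} \<rightarrow>\<^sub>E A" using yg by (auto simp: PiE_def extensional_def less_Suc_eq)
      ultimately show "f \<in> ?X" using yg by simp
    qed
  qed
  then have "card ?X = card ?Y" by (rule bij_betw_same_card)
  also have "\<dots> = (\<Sum>y\<in>A. card {g \<in> {..<t} \<rightarrow>\<^sub>E A. R y g})"
    using assms by (intro card_SigmaI) (auto intro: finite_PiE finite_subset[OF _ finite_PiE[of "{..<t}"]])
  finally show ?thesis .
qed

lemma image_lessThan_Suc_restrict:
  "f ` {..<Suc t} = insert (f t) (restrict f {..<t} ` {..<t})"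
  by (auto simp: lessThan_Suc)

lemma image_restrict_same: "restrict f {..<t} ` {..<t} = f ` {..<t}"
  by auto

definition sig :: "nat \<Rightarrow> nat \<Rightarrow> nat set \<Rightarrow> nat" where
  "sig n t S = card {f \<in> {..<t} \<rightarrow>\<^sub>E {..<n}. f ` {..<t} = S}"

lemma sig_Suc:
  assumes "S \<subseteq> {..<n}"
  shows "sig n (Suc t) S = card S * sig n t S + (\<Sum>x\<in>S. sig n t (S - {x}))"
proof -
  have "sig n (Suc t) S = card {f \<in> {..<Suc t} \<rightarrow>\<^sub>E {..<n}. insert (f t) (restrict f {..<t} ` {..<t}) = S}"
    unfolding sig_def by (simp only: image_lessThan_Suc_restrict)
  also have "\<dots> = (\<Sum>y\<in>{..<n}. card {g \<in> {..<t} \<rightarrow>\<^sub>E {..<n}. insert y (g ` {..<t}) = S})"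
    by (rule card_PiE_Suc) simp
  also have "\<dots> = (\<Sum>y\<in>S. card {g \<in> {..<t} \<rightarrow>\<^sub>E {..<n}. insert y (g ` {..<t}) = S})"
  proof (intro sum.mono_neutral_right)
    show "\<forall>i\<in>{..<n} - S. card {g \<in> {..<t} \<rightarrow>\<^sub>E {..<n}. insert i (g ` {..<t}) = S} = 0"
    proof
      fix i assume "i \<in> {..<n} - S"
      then have "{g \<in> {..<t} \<rightarrow>\<^sub>E {..<n}. insert i (g ` {..<t}) = S} = {}" by blast
      then show "card {g \<in> {..<t} \<rightarrow>\<^sub>E {..<n}. insert i (g ` {..<t}) = S} = 0" by (simp only: card.empty)
    qed
  qed (use assms in auto)
  also have "\<dots> = (\<Sum>y\<in>S. sig n t S + sig n t (S - {y}))"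
  proof (rule sum.cong[OF refl])
    fix y assume y: "y \<in> S"
    have "{g \<in> {..<t} \<rightarrow>\<^sub>E {..<n}. insert y (g ` {..<t}) = S}
        = {g \<in> {..<t} \<rightarrow>\<^sub>E {..<n}. g ` {..<t} = S} \<union> {g \<in> {..<t} \<rightarrow>\<^sub>E {..<n}. g ` {..<t} = S - {y}}"
      using y by auto
    moreover have "card (\<dots>) = sig n t S + sig n t (S - {y})"
      unfolding sig_def using y by (intro card_Un_disjoint fin_PiE_filter) auto
    ultimately show "card {g \<in> {..<t} \<rightarrow>\<^sub>E {..<n}. insert y (g ` {..<t}) = S} = sig n t S + sig n t (S - {y})"
      by simp
  qed
  also have "\<dots> = card S * sig n t S + (\<Sum>x\<in>S. sig n t (S - {x}))"
    by (simp add: sum.distrib)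
  finally show ?thesis .
qed

lemma sig_0: "sig n 0 S = (if S = {} then 1 else 0)"
  unfolding sig_def by auto

lemma sig_le: "sig n t S \<le> card S ^ t"
proof -
  have "{f \<in> {..<t} \<rightarrow>\<^sub>E {..<n}. f ` {..<t} = S} \<subseteq> {..<t} \<rightarrow>\<^sub>E S" by auto
  then have "sig n t S \<le> card ({..<t} \<rightarrow>\<^sub>E S)" if "finite S"
    unfolding sig_def using that by (intro card_mono) (auto intro: finite_PiE)
  moreover have "sig n t S = 0" if "infinite S"
  proof -
    have "{f \<in> {..<t} \<rightarrow>\<^sub>E {..<n}. f ` {..<t} = S} = {}" using that by auto
    then show ?thesis unfolding sig_def by (simp only: card.empty)
  qed
  ultimately show ?thesis by (cases "finite S") (auto simp: card_PiE)
qed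




lemma sig_bound: "real (sig n t S) / real n ^ t \<le> (real (card S) / real n) ^ t"
proof -
  have "real (sig n t S) \<le> real (card S) ^ t" using sig_le[of n t S] by (metis of_nat_le_iff of_nat_power)
  then show ?thesis by (simp add: power_divide divide_right_mono)
qed

lemma sig_sums:
  assumes "S \<subseteq> {..<n}" "card S < n"
  shows "(\<lambda>t. real (sig n t S) / real n ^ t) sums (1 / real ((n-1) choose card S))"
  using assms
proof (induction "card S" arbitrary: S)
  case 0
  have "finite S" using 0 finite_subset by blast
  then have S: "S = {}" using 0 by simp
  have "sig n t S = (if t = 0 then 1 else 0)" for t
  proof (cases t)
    case 0 then show ?thesis by (simp add: sig_0 S)
  next
    case (Suc m)
    have "{f \<in> {..<t} \<rightarrow>\<^sub>E {..<n}. f ` {..<t} = S} = {}" using Suc S by auto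
    then show ?thesis unfolding sig_def using Suc by (simp only: card.empty) simp
  qed
  then have "(\<lambda>t. real (sig n t S) / real n ^ t) = (\<lambda>t. if t = 0 then (\<lambda>_. 1::real) t else 0)"
    by (auto simp: fun_eq_iff)
  moreover have "(\<lambda>t. if t = 0 then (\<lambda>_. 1::real) t else 0) sums 1" using sums_single[of 0 "\<lambda>_. 1::real"] by simp
  ultimately show ?case using S by simp
next
  case (Suc s S)
  define r where "r = Suc s"
  have fin: "finite S" using Suc.prems finite_subset by blast
  have n0: "n > 0" using Suc.prems by simp
  define g where "g = (\<lambda>t. real (sig n t S) / real n ^ t)"
  have "summable g"
  proof (rule summable_comparison_test'[where N=0])
    show "summable (\<lambda>t. (real (card S) / real n) ^ t)"
      using Suc.prems n0 by (intro summable_geometric) simp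
    show "norm (g t) \<le> (real (card S) / real n) ^ t" for t
      unfolding g_def using sig_bound[of n t S] by simp
  qed
  then have gL: "g sums (suminf g)" by (rule summable_sums)
  have IH: "(\<lambda>t. real (sig n t (S - {x})) / real n ^ t) sums (1 / real ((n-1) choose s))" if "x \<in> S" for x
  proof -
    have "card (S - {x}) = s" using that fin Suc.hyps(2) by simp
    moreover have "S - {x} \<subseteq> {..<n}" using Suc.prems by auto
    ultimately show ?thesis using Suc.hyps(1)[of "S - {x}"] Suc.hyps(2) Suc.prems by simp
  qed
  have gS: "g (Suc t) = real r / real n * g t + 1 / real n * (\<Sum>x\<in>S. real (sig n t (S - {x})) / real n ^ t)" for t
    unfolding g_def using sig_Suc[OF Suc.prems(1), of t] n0 Suc.hyps(2)[symmetric]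
    by (simp add: r_def field_simps sum_divide_distrib[symmetric])
  have "(\<lambda>t. g (Suc t)) sums (real r / real n * suminf g + 1 / real n * (\<Sum>x\<in>S. 1 / real ((n-1) choose s)))"
    unfolding gS by (intro sums_add sums_mult sums_sum IH gL)
  then have "g sums (real r / real n * suminf g + 1 / real n * (\<Sum>x\<in>S. 1 / real ((n-1) choose s)) + g 0)"
    by (simp only: sums_Suc_iff)
  moreover have "S \<noteq> {}" using Suc.hyps(2) by (metis card.empty nat.distinct(1))
  then have "g 0 = 0" unfolding g_def by (simp add: sig_0)
  ultimately have "g sums (real r / real n * suminf g + 1 / real n * (\<Sum>x\<in>S. 1 / real ((n-1) choose s)))"
    by simp
  then have eq0: "suminf g = real r / real n * suminf g + 1 / real n * (\<Sum>x\<in>S. 1 / real ((n-1) choose s))"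
    by (rule sums_unique2[OF gL])
  have cS: "card S = r" using Suc.hyps(2) r_def by simp
  have sf: "(\<Sum>x\<in>S. 1 / real ((n-1) choose s)) = real r / real ((n-1) choose s)"
    by (simp add: cS)
  from eq0 have "suminf g = real r / real n * suminf g + 1 / real n * (real r / real ((n-1) choose s))"
    by (simp only: sf)
  then have eq: "suminf g = real r / real n * suminf g + real r / (real n * real ((n-1) choose s))"
    by simp
  have rn: "r < n" using Suc.prems Suc.hyps(2) r_def by simp
  have cpos: "((n-1) choose s) > 0" using rn r_def by simp
  have binom: "r * ((n-1) choose r) = (n - r) * ((n-1) choose s)"
  proof -
    have "Suc s * ((n-1) choose Suc s) = (n-1) * ((n-1-1) choose s)" by (rule binomial_absorption)
    also have "\<dots> = (n - 1 - s) * ((n-1) choose s)" by (rule binomial_absorb_comp[symmetric])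
    finally show ?thesis using r_def by simp
  qed
  then have binomR: "real r * real ((n-1) choose r) = (real n - real r) * real ((n-1) choose s)"
    using rn by (metis of_nat_diff of_nat_mult less_imp_le)
  from eq have "suminf g * (real n - real r) = real r / real ((n-1) choose s)"
    using n0 by (simp add: field_simps)
  then have e2: "suminf g * (real n - real r) = real r / real ((n-1) choose s)" .
  have pos: "real n - real r > 0" using rn by simp
  have "suminf g = (suminf g * (real n - real r)) / (real n - real r)" using pos by simp
  also have "\<dots> = real r / (real ((n-1) choose s) * (real n - real r))" unfolding e2 by simp
  also have "\<dots> = real r / (real r * real ((n-1) choose r))"
    using binomR by (simp add: mult.commute)
  also have "\<dots> = 1 / real ((n-1) choose r)" using r_def by simp
  finally have "suminf g = 1 / real ((n-1) choose card S)" using cS by simp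
  then show ?case using gL unfolding g_def by simp
qed




locale spanpred =
  fixes P :: "nat set \<Rightarrow> bool" and n :: nat
  assumes mono: "P S \<Longrightarrow> S \<subseteq> T \<Longrightarrow> T \<subseteq> {..<n} \<Longrightarrow> P T"
    and full: "P {..<n}"
    and empty: "\<not> P {}"
begin

definition Nc :: "nat \<Rightarrow> nat" where
  "Nc t = card {f \<in> {..<t} \<rightarrow>\<^sub>E {..<n}. \<not> P (f ` {..<t})}"

definition FF :: "nat set set" where
  "FF = {S. S \<subseteq> {..<n} \<and> \<not> P S}"

definition pr :: "nat \<Rightarrow> real" where
  "pr t = real (Nc t) / real n ^ t"

lemma n_pos: "n > 0"
  using full empty by (cases n) auto

lemma FF_finite: "finite FF"
  unfolding FF_def by (rule finite_subset[of _ "Pow {..<n}"]) auto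

lemma FF_card: "S \<in> FF \<Longrightarrow> card S < n"
proof -
  assume S: "S \<in> FF"
  then have "S \<subseteq> {..<n}" "S \<noteq> {..<n}" using full unfolding FF_def by auto
  then have "S \<subset> {..<n}" by auto
  then show "card S < n" using psubset_card_mono[of "{..<n}" S] by simp
qed

lemma Nc_sum: "Nc t = (\<Sum>S\<in>FF. sig n t S)"
proof -
  have eq: "{f \<in> {..<t} \<rightarrow>\<^sub>E {..<n}. \<not> P (f ` {..<t})}
      = (\<Union>S\<in>FF. {f \<in> {..<t} \<rightarrow>\<^sub>E {..<n}. f ` {..<t} = S})"
    unfolding FF_def by (auto simp: PiE_def Pi_def) 
  have "Nc t = card (\<Union>S\<in>FF. {f \<in> {..<t} \<rightarrow>\<^sub>E {..<n}. f ` {..<t} = S})"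
    unfolding Nc_def eq ..
  also have "\<dots> = (\<Sum>S\<in>FF. sig n t S)"
    unfolding sig_def by (intro card_UN_disjoint FF_finite) (auto intro: fin_PiE_filter)
  finally show ?thesis .
qed

definition Q :: real where
  "Q = (\<Sum>S\<in>FF. 1 / real ((n-1) choose card S))"

lemma pr_sum: "pr t = (\<Sum>S\<in>FF. real (sig n t S) / real n ^ t)"
  unfolding pr_def Nc_sum by (simp add: sum_divide_distrib)

lemma pr_sums: "pr sums Q"
proof -
  have "(\<lambda>t. \<Sum>S\<in>FF. real (sig n t S) / real n ^ t) sums Q"
    unfolding Q_def
  proof (rule sums_sum)
    fix S assume "S \<in> FF"
    then show "(\<lambda>t. real (sig n t S) / real n ^ t) sums (1 / real ((n-1) choose card S))"
      using FF_card by (intro sig_sums) (auto simp: FF_def)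
  qed
  then show ?thesis unfolding pr_sum[abs_def] .
qed

lemma card_stop:
  "card {f \<in> {..<Suc m} \<rightarrow>\<^sub>E {..<n}. P (f ` {..<Suc m}) \<and> \<not> P (f ` {..<m})} = n * Nc m - Nc (Suc m)"
proof -
  define B where "B = {f \<in> {..<Suc m} \<rightarrow>\<^sub>E {..<n}. \<not> P (restrict f {..<m} ` {..<m})}"
  define D where "D = {f \<in> {..<Suc m} \<rightarrow>\<^sub>E {..<n}. \<not> P (f ` {..<Suc m})}"
  have cB: "card B = n * Nc m"
    unfolding B_def Nc_def by (subst card_PiE_Suc[where R="\<lambda>y g. \<not> P (g ` {..<m})"]) auto
  have DB: "D \<subseteq> B"
  proof
    fix f assume "f \<in> D"
    then have f: "f \<in> {..<Suc m} \<rightarrow>\<^sub>E {..<n}" "\<not> P (f ` {..<Suc m})" unfolding D_def by auto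
    have "f ` {..<Suc m} \<subseteq> {..<n}" using f(1) by (auto simp: PiE_def Pi_def)
    then have "\<not> P (f ` {..<m})" using f(2) mono[of "f ` {..<m}" "f ` {..<Suc m}"] lessThan_Suc[of m] by auto
    then show "f \<in> B" unfolding B_def using f(1) by simp
  qed
  have "{f \<in> {..<Suc m} \<rightarrow>\<^sub>E {..<n}. P (f ` {..<Suc m}) \<and> \<not> P (f ` {..<m})} = B - D"
    unfolding B_def D_def by auto
  then have "card {f \<in> {..<Suc m} \<rightarrow>\<^sub>E {..<n}. P (f ` {..<Suc m}) \<and> \<not> P (f ` {..<m})} = card B - card D"
    using DB by (simp add: card_Diff_subset D_def fin_PiE_filter)
  also have "card D = Nc (Suc m)" unfolding D_def Nc_def ..
  finally show ?thesis using cB by simp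
qed

definition ps :: "nat \<Rightarrow> real" where
  "ps t = real (card {f \<in> {..<t} \<rightarrow>\<^sub>E {..<n}. P (f ` {..<t}) \<and> \<not> P (f ` {..<t - 1})}) / real n ^ t"

lemma ps_0: "ps 0 = 0"
  unfolding ps_def using empty by simp

lemma Nc_le: "Nc (Suc m) \<le> n * Nc m"
proof -
  have "card {f \<in> {..<Suc m} \<rightarrow>\<^sub>E {..<n}. \<not> P (f ` {..<Suc m})} \<le> card {f \<in> {..<Suc m} \<rightarrow>\<^sub>E {..<n}. \<not> P (restrict f {..<m} ` {..<m})}"
  proof (intro card_mono fin_PiE_filter)
    show "{f \<in> {..<Suc m} \<rightarrow>\<^sub>E {..<n}. \<not> P (f ` {..<Suc m})} \<subseteq> {f \<in> {..<Suc m} \<rightarrow>\<^sub>E {..<n}. \<not> P (restrict f {..<m} ` {..<m})}"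
    proof
      fix f assume "f \<in> {f \<in> {..<Suc m} \<rightarrow>\<^sub>E {..<n}. \<not> P (f ` {..<Suc m})}"
      then have f: "f \<in> {..<Suc m} \<rightarrow>\<^sub>E {..<n}" "\<not> P (f ` {..<Suc m})" by auto
      have "f ` {..<Suc m} \<subseteq> {..<n}" using f(1) by (auto simp: PiE_def Pi_def)
      then have "\<not> P (f ` {..<m})" using f(2) mono[of "f ` {..<m}" "f ` {..<Suc m}"] lessThan_Suc[of m] by auto
      then show "f \<in> {f \<in> {..<Suc m} \<rightarrow>\<^sub>E {..<n}. \<not> P (restrict f {..<m} ` {..<m})}" using f(1) by simp
    qed
  qed auto
  also have "\<dots> = n * Nc m"
    unfolding Nc_def by (subst card_PiE_Suc[where R="\<lambda>y g. \<not> P (g ` {..<m})"]) auto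
  finally show ?thesis unfolding Nc_def .
qed

lemma ps_Suc: "ps (Suc m) = pr m - pr (Suc m)"
proof -
  have "ps (Suc m) = (real n * real (Nc m) - real (Nc (Suc m))) / real n ^ Suc m"
    unfolding ps_def using card_stop[of m] Nc_le[of m] by (simp add: of_nat_diff)
  also have "\<dots> = pr m - pr (Suc m)"
    unfolding pr_def using n_pos by (simp add: field_simps)
  finally show ?thesis .
qed

lemma partial: "(\<Sum>t<Suc M. real t * ps t) = (\<Sum>t<M. pr t) - real M * pr M"
  by (induction M) (auto simp: ps_0 ps_Suc algebra_simps)

lemma Mpr_lim: "(\<lambda>M. real M * pr M) \<longlonglongrightarrow> 0"
proof (rule tendsto_sandwich[where f="\<lambda>_. 0" and h="\<lambda>M. \<Sum>S\<in>FF. real M * (real (card S) / real n) ^ M"])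
  show "\<forall>\<^sub>F M in sequentially. 0 \<le> real M * pr M"
    by (auto simp: pr_def)
  show "\<forall>\<^sub>F M in sequentially. real M * pr M \<le> (\<Sum>S\<in>FF. real M * (real (card S) / real n) ^ M)"
  proof (rule always_eventually, rule allI)
    fix M
    have "real M * pr M = (\<Sum>S\<in>FF. real M * (real (sig n M S) / real n ^ M))"
      unfolding pr_sum by (simp add: sum_distrib_left)
    also have "\<dots> \<le> (\<Sum>S\<in>FF. real M * (real (card S) / real n) ^ M)"
      by (intro sum_mono mult_left_mono sig_bound) auto
    finally show "real M * pr M \<le> (\<Sum>S\<in>FF. real M * (real (card S) / real n) ^ M)" .
  qed
  show "(\<lambda>_. 0::real) \<longlonglongrightarrow> 0" by simp
  have "(\<lambda>M. \<Sum>S\<in>FF. real M * (real (card S) / real n) ^ M) \<longlonglongrightarrow> (\<Sum>S\<in>FF. (0::real))"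
  proof (rule tendsto_sum)
    fix S assume "S \<in> FF"
    then have "norm (real (card S) / real n) < 1" using FF_card n_pos by simp
    then show "(\<lambda>M. real M * (real (card S) / real n) ^ M) \<longlonglongrightarrow> 0"
      using powser_times_n_limit_0 by blast
  qed
  then show "(\<lambda>M. \<Sum>S\<in>FF. real M * (real (card S) / real n) ^ M) \<longlonglongrightarrow> 0" by simp
qed

lemma main_sums: "(\<lambda>t. real t * ps t) sums Q"
proof -
  have "(\<lambda>M. (\<Sum>t<M. pr t) - real M * pr M) \<longlonglongrightarrow> Q - 0"
    using pr_sums Mpr_lim unfolding sums_def by (intro tendsto_diff)
  moreover have "(\<lambda>M. \<Sum>t<Suc M. real t * ps t) = (\<lambda>M. (\<Sum>t<M. pr t) - real M * pr M)"
    by (rule ext) (rule partial)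
  ultimately have "(\<lambda>M. \<Sum>t<Suc M. real t * ps t) \<longlonglongrightarrow> Q" by simp
  then show ?thesis unfolding sums_def by (rule LIMSEQ_imp_Suc)
qed

end




lemma harm_tail: "j \<le> n \<Longrightarrow> (\<Sum>s<j. 1 / real (n - s)) = harm n - (harm (n - j) :: real)"
proof (induction j)
  case 0 then show ?case by simp
next
  case (Suc j)
  have e: "n - j = Suc (n - Suc j)" using Suc.prems by simp
  have "(\<Sum>s<Suc j. 1 / real (n - s)) = harm n - harm (n - j) + 1 / real (n - j)"
    using Suc by simp
  also have "harm (n - j) = (harm (n - Suc j) :: real) + 1 / real (n - j)"
    unfolding e harm_Suc by (simp add: inverse_eq_divide)
  finally show ?case by simp
qed

theorem mainTheorem7:
  fixes G :: "nat \<Rightarrow> nat \<Rightarrow> 'a::{field,finite}"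
    and C :: "(nat \<Rightarrow> 'a) set"
    and k n d :: nat
  assumes "2 \<le> k" and "k \<le> n"
    and "linear_code n C"
    and "generator_matrix k n G C"
    and "d = min_dist n C"
  shows "expected_draws k n G =
           real n * (harm n - harm (d - 1))
           - (\<Sum>s=k..n-d. real (alpha k n G s) / real ((n - 1) choose s))"
proof -
  have ri: "rows_indep k n G" and cC: "code_of k n G = C"
    using assms(4) unfolding generator_matrix_def by auto
  have Csub: "C \<subseteq> space_n n" using assms(3) unfolding linear_code_def by auto
  define W where "W = {hamming_weight n x | x. x \<in> C \<and> x \<noteq> (\<lambda>_. 0)}"
  have dW: "d = Min W" using assms(5) unfolding min_dist_def W_def by simp
  have hw_le: "hamming_weight n x \<le> n" for x :: "nat \<Rightarrow> 'a"
  proof -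
    have "card {j. j < n \<and> x j \<noteq> 0} \<le> card {..<n}" by (intro card_mono) auto
    then show ?thesis unfolding hamming_weight_def by simp
  qed
  have Wfin: "finite W" by (rule finite_subset[of _ "{..n}"]) (auto simp: W_def hw_le)
  define cw where "cw = (\<lambda>c::nat \<Rightarrow> 'a. (\<lambda>j. if j < n then (\<Sum>i<k. c i * G i j) else 0))"
  have cw_in: "cw c \<in> C" for c unfolding cC[symmetric] code_of_def cw_def by blast
  have cw_nz: "cw c \<noteq> (\<lambda>_. 0)" if "\<exists>i<k. c i \<noteq> 0" for c
  proof
    assume "cw c = (\<lambda>_. 0)"
    then have "\<forall>j<n. (\<Sum>i<k. c i * G i j) = 0" unfolding cw_def by (metis (mono_tags, lifting))
    then have "\<forall>i<k. c i = 0" using ri unfolding rows_indep_def by blast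
    then show False using that by blast
  qed
  have Wne: "W \<noteq> {}"
  proof -
    have "cw (\<lambda>i. if i = 0 then 1 else 0) \<noteq> (\<lambda>_. 0)" using assms(1) by (intro cw_nz) auto
    then show ?thesis unfolding W_def using cw_in by blast
  qed
  have W1: "w \<ge> 1" if wW: "w \<in> W" for w
  proof -
    obtain x where x: "x \<in> C" "x \<noteq> (\<lambda>_. 0)" "w = hamming_weight n x" using wW unfolding W_def by blast
    then obtain j where j: "x j \<noteq> 0" by auto
    have "x \<in> space_n n" using x(1) Csub by blast
    then have xz: "\<forall>j'\<ge>n. x j' = 0" unfolding space_n_def by simp
    have "j < n"
    proof (rule ccontr)
      assume "\<not> j < n"
      then have "j \<ge> n" by simp
      then show False using xz j by blast
    qed
    then have "{j. j < n \<and> x j \<noteq> 0} \<noteq> {}" using j by blast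
    then have "card {j. j < n \<and> x j \<noteq> 0} > 0" by (simp add: card_gt_0_iff)
    then show ?thesis using x(3) unfolding hamming_weight_def by simp
  qed
  have d1: "d \<ge> 1" using W1 Min_in[OF Wfin Wne] dW by simp
  have dn: "d \<le> n"
  proof -
    obtain x where x: "x \<in> C" "x \<noteq> (\<lambda>_. 0)" "Min W = hamming_weight n x" using Min_in[OF Wfin Wne] unfolding W_def by blast
    then show ?thesis using dW hw_le by simp
  qed
  have nonspan_card: "card S + d \<le> n" if S: "S \<subseteq> {..<n}" "\<not> cols_span k G S" for S
  proof -
    have fS: "finite S" using S finite_subset by blast
    obtain c where c: "\<exists>i<k. c i \<noteq> 0" "\<forall>j\<in>S. (\<Sum>i<k. c i * G i j) = 0"
      using nonspan_annihilator[OF fS S(2)] by blast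
    have "hamming_weight n (cw c) \<in> W" unfolding W_def using cw_in cw_nz[OF c(1)] by blast
    then have "d \<le> hamming_weight n (cw c)" using dW Wfin by simp
    also have "\<dots> \<le> card ({..<n} - S)"
      unfolding hamming_weight_def by (intro card_mono) (auto simp: cw_def c(2))
    also have "\<dots> = n - card S" using S fS by (simp add: card_Diff_subset)
    finally show ?thesis using S fS card_mono[of "{..<n}" S] by simp
  qed
  have full: "cols_span k G {..<n}"
    using nonspan_card[of "{..<n}"] d1 by auto
  have empty: "\<not> cols_span k G {}" using small_nonspan[of "{}" k G] assms(1) by simp
  interpret sp: spanpred "cols_span k G" n
  proof
    show "cols_span k G T" if "cols_span k G S" "S \<subseteq> T" "T \<subseteq> {..<n}" for S T
      using cols_span_mono[OF that(1,2)] that(3) finite_subset by blast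
  qed (use full empty in auto)
  have "expected_draws k n G = sp.Q"
    unfolding expected_draws_def
  proof (rule sums_unique[symmetric])
    have "prob_stop k n G = sp.ps" unfolding prob_stop_def[abs_def] sp.ps_def[abs_def] ..
    then show "(\<lambda>t. real t * prob_stop k n G t) sums sp.Q" using sp.main_sums by simp
  qed
  define cnt where "cnt = (\<lambda>s. card {S \<in> sp.FF. card S = s})"
  have FFcard: "card S + d \<le> n" if "S \<in> sp.FF" for S
    using that nonspan_card unfolding sp.FF_def by blast
  have "sp.Q = (\<Sum>s\<in>{..n}. \<Sum>S\<in>{S \<in> sp.FF. card S = s}. 1 / real ((n-1) choose card S))"
    unfolding sp.Q_def
    by (rule sum.group[symmetric]) (use sp.FF_finite FFcard in force)+
  also have "\<dots> = (\<Sum>s\<in>{..n}. real (cnt s) / real ((n-1) choose s))"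
    unfolding cnt_def by (intro sum.cong refl) simp
  also have "\<dots> = (\<Sum>s\<in>{..n-d}. real (cnt s) / real ((n-1) choose s))"
  proof (rule sum.mono_neutral_right)
    show "\<forall>s\<in>{..n} - {..n-d}. real (cnt s) / real ((n-1) choose s) = 0"
    proof
      fix s assume "s \<in> {..n} - {..n-d}"
      then have "s > n - d" by simp
      then have e: "{S \<in> sp.FF. card S = s} = {}" using FFcard by force
      show "real (cnt s) / real ((n-1) choose s) = 0" unfolding cnt_def e by simp
    qed
  qed auto
  also have "\<dots> = (\<Sum>s\<in>{..n-d}. real (n choose s) / real ((n-1) choose s))
       - (\<Sum>s\<in>{..n-d}. real (alpha k n G s) / real ((n-1) choose s))"
  proof -
    have "real (cnt s) = real (n choose s) - real (alpha k n G s)" for s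
    proof -
      have un: "{S. S \<subseteq> {..<n} \<and> card S = s} = {S \<in> sp.FF. card S = s} \<union> {S. S \<subseteq> {..<n} \<and> card S = s \<and> cols_span k G S}"
        unfolding sp.FF_def by auto
      have "card {S. S \<subseteq> {..<n} \<and> card S = s} = cnt s + alpha k n G s"
        unfolding un cnt_def alpha_def
        by (rule card_Un_disjoint) (auto simp: sp.FF_def intro: finite_subset[of _ "Pow {..<n}"])
      then show ?thesis using n_subsets[of "{..<n}" s] by simp
    qed
    then show ?thesis by (simp add: diff_divide_distrib sum_subtractf)
  qed
  also have "(\<Sum>s\<in>{..n-d}. real (n choose s) / real ((n-1) choose s)) = real n * (harm n - harm (d - 1))"
  proof -
    have "(\<Sum>s\<in>{..n-d}. real (n choose s) / real ((n-1) choose s)) = (\<Sum>s\<in>{..n-d}. real n * (1 / real (n - s)))"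
    proof (intro sum.cong refl)
      fix s assume "s \<in> {..n-d}"
      then have sn: "s < n" using d1 dn by auto
      have "(n - s) * (n choose s) = n * ((n - 1) choose s)" by (rule binomial_absorb_comp)
      then have "real (n - s) * real (n choose s) = real n * real ((n - 1) choose s)"
        by (metis of_nat_mult)
      moreover have "real ((n - 1) choose s) > 0" using sn by simp
      moreover have "real (n - s) > 0" using sn by simp
      ultimately show "real (n choose s) / real ((n-1) choose s) = real n * (1 / real (n - s))"
        by (simp add: field_simps)
    qed
    also have "\<dots> = real n * (\<Sum>s<Suc (n-d). 1 / real (n - s))"
      by (simp add: sum_distrib_left lessThan_Suc_atMost)
    also have "\<dots> = real n * (harm n - harm (n - Suc (n - d)))"
      using d1 dn by (subst harm_tail) auto
    also have "n - Suc (n - d) = d - 1" using d1 dn by simp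
    finally show ?thesis .
  qed
  also have "(\<Sum>s\<in>{..n-d}. real (alpha k n G s) / real ((n-1) choose s))
      = (\<Sum>s=k..n-d. real (alpha k n G s) / real ((n-1) choose s))"
  proof (rule sum.mono_neutral_right)
    show "\<forall>s\<in>{..n-d} - {k..n-d}. real (alpha k n G s) / real ((n-1) choose s) = 0"
    proof
      fix s assume "s \<in> {..n-d} - {k..n-d}"
      then have "s < k" by auto
      then have e: "{S. S \<subseteq> {..<n} \<and> card S = s \<and> cols_span k G S} = {}"
        using small_nonspan[of _ k G] finite_subset[of _ "{..<n}"] by blast
      show "real (alpha k n G s) / real ((n-1) choose s) = 0" unfolding alpha_def e by simp
    qed
  qed auto
  finally show ?thesis using \<open>expected_draws k n G = sp.Q\<close> by simp
qed

end
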